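(* Let $D\subset\mathbb{R}^N$ be a bounded domain or $D=\mathbb{R}^N$. Suppose $g(t,x)$ is bounded and uniformly continuous in $(t,x)\in\mathbb{R}\times\bar D$ with $g(t,x)>0$ for all $(t,x)\in\mathbb{R}\times D$, and $f$ satisfies (A-$f$) in the context. Then for any fixed $x\in\bar D$, the ordinary differential equation $$u_t=g(t,x)+u\,f(t,x,u)$$ has at most one strictly positive bounded entire solution $u^*(t)$ (i.e. a solution defined for all $t\in\mathbb{R}$ with $\inf_{t\in\mathbb{R}}u^*(t)>0$ and $\sup_{t\in\mathbb{R}}u^*(t)<\infty$).
   Context: Assumption (A-$f$) (for $f:\mathbb{R}\times\bar D\times\mathbb{R}\to\mathbb{R}$): $f$ is $C^1$ in $u$; $f$ and $f_u$ are uniformly continuous and bounded on $\mathbb{R}\times\bar D\times E$ for every bounded $E\subset\mathbb{R}$; $f$ is (Bohr) almost periodic in $t$ uniformly with respect to $x\in\bar D$ and $u$ in bounded sets; when $D=\mathbb{R}^N$, $f$ is also almost periodic in $x$ uniformly with respect to $t$ and $u$ in bounded sets; there is $U>0$ with $f(t,x,u)+1<0$ for all $(t,x)$ and $u\ge U$; and $\sup_{t\in\mathbb{R},x\in\bar D}f_u(t,x,u)<0$ for each $u\ge0$. *)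

theory Defs
  imports "HOL-Analysis.Analysis"
begin

text \<open>Bohr almost periodicity in t, uniformly w.r.t. x in the closure of D and u in bounded sets:
  for every bounded E and every eps > 0 the set of eps-almost periods is relatively dense.\<close>
definition ap_in_t :: "'a::euclidean_space set \<Rightarrow> (real \<Rightarrow> 'a \<Rightarrow> real \<Rightarrow> real) \<Rightarrow> bool" where
  "ap_in_t D f \<longleftrightarrow> (\<forall>E. bounded E \<longrightarrow> (\<forall>\<epsilon>>0. \<exists>L>0. \<forall>a::real. \<exists>\<tau>\<in>{a..a+L}.
      \<forall>t x u. x \<in> closure D \<and> u \<in> E \<longrightarrow> \<bar>f (t + \<tau>) x u - f t x u\<bar> < \<epsilon>))"

text \<open>Bohr almost periodicity in x (for D = R^N), uniformly w.r.t. t and u in bounded sets: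
  the set of eps-almost periods in R^N is relatively dense.\<close>
definition ap_in_x :: "(real \<Rightarrow> 'a::euclidean_space \<Rightarrow> real \<Rightarrow> real) \<Rightarrow> bool" where
  "ap_in_x f \<longleftrightarrow> (\<forall>E. bounded E \<longrightarrow> (\<forall>\<epsilon>>0. \<exists>L>0. \<forall>a::'a. \<exists>\<tau>\<in>cball a L.
      \<forall>t x u. u \<in> E \<longrightarrow> \<bar>f t (x + \<tau>) u - f t x u\<bar> < \<epsilon>))"

definition assm_Af :: "'a::euclidean_space set \<Rightarrow> (real \<Rightarrow> 'a \<Rightarrow> real \<Rightarrow> real)
    \<Rightarrow> (real \<Rightarrow> 'a \<Rightarrow> real \<Rightarrow> real) \<Rightarrow> bool" where
  "assm_Af D f fu \<longleftrightarrow>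
     (\<forall>t x u. x \<in> closure D \<longrightarrow> ((\<lambda>v. f t x v) has_real_derivative fu t x u) (at u)) \<and>
     (\<forall>t x. x \<in> closure D \<longrightarrow> continuous_on UNIV (\<lambda>v. fu t x v)) \<and>
     (\<forall>E. bounded E \<longrightarrow>
        uniformly_continuous_on (UNIV \<times> closure D \<times> E) (\<lambda>(t,x,u). f t x u) \<and>
        uniformly_continuous_on (UNIV \<times> closure D \<times> E) (\<lambda>(t,x,u). fu t x u) \<and>
        bounded ((\<lambda>(t,x,u). f t x u) ` (UNIV \<times> closure D \<times> E)) \<and>
        bounded ((\<lambda>(t,x,u). fu t x u) ` (UNIV \<times> closure D \<times> E))) \<and>
     ap_in_t D f \<and>
     (D = UNIV \<longrightarrow> ap_in_x f) \<and>
     (\<exists>U>0. \<forall>t x u. x \<in> closure D \<and> u \<ge> U \<longrightarrow> f t x u + 1 < 0) \<and>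
     (\<forall>u\<ge>0. Sup ((\<lambda>(t,x). fu t x u) ` (UNIV \<times> closure D)) < 0)"

definition pos_bdd_entire_sol :: "(real \<Rightarrow> 'a \<Rightarrow> real) \<Rightarrow> (real \<Rightarrow> 'a \<Rightarrow> real \<Rightarrow> real)
    \<Rightarrow> 'a \<Rightarrow> (real \<Rightarrow> real) \<Rightarrow> bool" where
  "pos_bdd_entire_sol g f x u \<longleftrightarrow>
     (\<forall>t. (u has_real_derivative (g t x + u t * f t x (u t))) (at t)) \<and>
     bdd_below (range u) \<and> Inf (range u) > 0 \<and> bdd_above (range u)"

end

theory Submission
  imports Defs
begin

lemma pt_le:
  fixes F F' :: "real \<Rightarrow> real"
  assumes m: "0 < m" and ab: "m \<le> b" "b \<le> a" "a \<le> M" and G: "0 \<le> G" and d: "0 < \<delta>"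
    and der: "\<And>v. DERIV F v :> F' v" and neg: "\<And>v. m \<le> v \<Longrightarrow> v \<le> M \<Longrightarrow> F' v \<le> -\<delta>"
  shows "(ln a - ln b) * ((G + a * F a) / a - (G + b * F b) / b) \<le> - (\<delta> * m) * (ln a - ln b)^2"
proof -
  have a0: "a > 0" "b > 0" using m ab by auto
  define L where "L = ln a - ln b"
  have L0: "L \<ge> 0" using a0 ab by (simp add: L_def)
  have Lle: "L \<le> (a - b) / b" using ln_diff_le[OF a0] by (simp add: L_def)
  have "(a - b) / b \<le> (a - b) / m" using ab m by (intro divide_left_mono) auto
  with Lle have "L \<le> (a - b) / m" by linarith
  hence amL: "m * L \<le> a - b" using m by (simp add: pos_le_divide_eq mult.commute)
  have e1: "(G + a * F a) / a - (G + b * F b) / b = (G / a - G / b) + (F a - F b)"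
    using a0 by (simp add: field_simps)
  have g1: "G / a - G / b \<le> 0" using a0 ab G by (simp add: divide_left_mono)
  have "(\<lambda>v. F v + \<delta> * v) a \<le> (\<lambda>v. F v + \<delta> * v) b"
    apply (rule DERIV_nonpos_imp_nonincreasing[OF ab(2)])
    apply (rule exI[of _ "F' _ + \<delta>"])
    using ab by (auto intro!: derivative_eq_intros der) (smt (verit) neg)
  hence f1: "F a - F b \<le> - \<delta> * (a - b)" by (simp add: algebra_simps)
  have "(G / a - G / b) + (F a - F b) \<le> - \<delta> * (m * L)"
  proof -
    have "\<delta> * (m * L) \<le> \<delta> * (a - b)" using amL d by simp
    thus ?thesis using g1 f1 by linarith
  qed
  hence "L * ((G / a - G / b) + (F a - F b)) \<le> L * (- \<delta> * (m * L))"
    using L0 by (rule mult_left_mono)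
  thus ?thesis unfolding e1 L_def[symmetric] by (simp add: power2_eq_square algebra_simps)
qed

lemma pt:
  fixes F F' :: "real \<Rightarrow> real"
  assumes m: "0 < m" and ab: "m \<le> b" "b \<le> M" "m \<le> a" "a \<le> M" and G: "0 \<le> G" and d: "0 < \<delta>"
    and der: "\<And>v. DERIV F v :> F' v" and neg: "\<And>v. m \<le> v \<Longrightarrow> v \<le> M \<Longrightarrow> F' v \<le> -\<delta>"
  shows "(ln a - ln b) * ((G + a * F a) / a - (G + b * F b) / b) \<le> - (\<delta> * m) * (ln a - ln b)^2"
proof (cases "b \<le> a")
  case True then show ?thesis using pt_le[OF m _ True _ G d der neg] ab by auto
next
  case False
  then have "(ln b - ln a) * ((G + b * F b) / b - (G + a * F a) / a) \<le> - (\<delta> * m) * (ln b - ln a)^2"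
    using pt_le[OF m _ _ _ G d der neg, of a b] ab by auto
  moreover have "\<And>p q r s::real. (p - q) * (r - s) = (q - p) * (s - r)" by (simp add: algebra_simps)
  ultimately show ?thesis by (metis power2_commute)
qed

lemma key:
  fixes F F' :: "real \<Rightarrow> real \<Rightarrow> real" and G u1 u2 :: "real \<Rightarrow> real"
  assumes m: "0 < m" and d: "0 < \<delta>" and G: "\<And>t. 0 \<le> G t"
    and der: "\<And>t v. DERIV (F t) v :> F' t v" and neg: "\<And>t v. m \<le> v \<Longrightarrow> v \<le> M \<Longrightarrow> F' t v \<le> -\<delta>"
    and d1: "\<And>t. (u1 has_real_derivative (G t + u1 t * F t (u1 t))) (at t)"
    and d2: "\<And>t. (u2 has_real_derivative (G t + u2 t * F t (u2 t))) (at t)"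
    and b1: "\<And>t. m \<le> u1 t \<and> u1 t \<le> M"
    and b2: "\<And>t. m \<le> u2 t \<and> u2 t \<le> M"
  shows "u1 = u2"
proof (rule ccontr)
  assume "u1 \<noteq> u2"
  then obtain t0 where ne: "u1 t0 \<noteq> u2 t0" by auto
  define w where "w t = ln (u1 t) - ln (u2 t)" for t
  define w' where "w' t = (G t + u1 t * F t (u1 t)) / u1 t - (G t + u2 t * F t (u2 t)) / u2 t" for t
  define V where "V t = (w t)^2" for t
  define k where "k = 2 * (\<delta> * m)"
  have k: "k > 0" using m d by (simp add: k_def)
  have pos: "u1 t > 0" "u2 t > 0" for t using b1[of t] b2[of t] m by auto
  have dw: "(w has_real_derivative w' t) (at t)" for t
  proof -
    have "((\<lambda>t. ln (u1 t)) has_real_derivative inverse (u1 t) * (G t + u1 t * F t (u1 t))) (at t)"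
      by (rule DERIV_chain2[OF DERIV_ln[OF pos(1)] d1])
    moreover have "((\<lambda>t. ln (u2 t)) has_real_derivative inverse (u2 t) * (G t + u2 t * F t (u2 t))) (at t)"
      by (rule DERIV_chain2[OF DERIV_ln[OF pos(2)] d2])
    ultimately have "(w has_real_derivative inverse (u1 t) * (G t + u1 t * F t (u1 t)) - inverse (u2 t) * (G t + u2 t * F t (u2 t))) (at t)"
      unfolding w_def by (rule DERIV_diff)
    thus ?thesis unfolding w'_def by (simp add: divide_inverse mult.commute)
  qed
  have dV: "(V has_real_derivative 2 * w t * w' t) (at t)" for t
    unfolding V_def using DERIV_power[OF dw[of t], of 2] by (simp add: algebra_simps)
  have ww: "w t * w' t \<le> - (\<delta> * m) * (w t)^2" for t
  proof -
    have "m \<le> u2 t" "u2 t \<le> M" "m \<le> u1 t" "u1 t \<le> M" using b1[of t] b2[of t] by auto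
    note h = this
    have "(ln (u1 t) - ln (u2 t)) * ((G t + u1 t * F t (u1 t)) / u1 t - (G t + u2 t * F t (u2 t)) / u2 t) \<le> - (\<delta> * m) * (ln (u1 t) - ln (u2 t))^2"
      by (rule pt[OF m h G[of t] d der[where t=t] neg[where t=t]])
    thus ?thesis by (simp only: w_def w'_def)
  qed
  have dVle: "2 * w t * w' t \<le> - k * V t" for t
  proof -
    have e1: "2 * w t * w' t = 2 * (w t * w' t)" by (rule mult.assoc)
    have e2: "- k * V t = 2 * (- (\<delta> * m) * (w t)^2)" unfolding k_def V_def by (rule HOL.trans[OF mult_minus_left], simp only: mult.assoc mult_minus_left)
    show ?thesis unfolding e1 e2 using ww[of t] by linarith
  qed
  have V0: "V t \<ge> 0" for t unfolding V_def by simp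
  have Vt0: "V t0 > 0"
  proof -
    have "ln (u1 t0) \<noteq> ln (u2 t0)" using ne ln_inj_iff[OF pos(1)[of t0] pos(2)[of t0]] by blast
    hence "w t0 \<noteq> 0" unfolding w_def by linarith
    thus ?thesis unfolding V_def by simp
  qed
  have Vmono: "V t0 \<le> V s" if "s \<le> t0" for s
  proof (rule DERIV_nonpos_imp_nonincreasing[OF that])
    fix x
    have "0 \<le> k * V x" using k V0[of x] by simp
    hence "2 * w x * w' x \<le> 0" using dVle[of x] by linarith
    thus "\<exists>y. (V has_real_derivative y) (at x) \<and> y \<le> 0" using dV by blast
  qed
  have grow: "V t0 + k * V t0 * t0 \<le> V s + k * V t0 * s" if "s \<le> t0" for s
  proof -
    have "(\<lambda>t. V t + k * V t0 * t) t0 \<le> (\<lambda>t. V t + k * V t0 * t) s"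
    proof (rule DERIV_nonpos_imp_nonincreasing[OF that])
      fix x assume x: "s \<le> x" "x \<le> t0"
      have "k * V t0 \<le> k * V x" using Vmono[of x] x k by simp
      hence "2 * w x * w' x + k * V t0 \<le> 0" using dVle[of x] by linarith
      moreover have "((\<lambda>t. V t + k * V t0 * t) has_real_derivative 2 * w x * w' x + k * V t0) (at x)"
        using DERIV_add[OF dV[of x] DERIV_cmult[OF DERIV_ident, of "k * V t0" x]] by simp
      ultimately show "\<exists>y. ((\<lambda>t. V t + k * V t0 * t) has_real_derivative y) (at x) \<and> y \<le> 0" by blast
    qed
    thus ?thesis by simp
  qed
  define B where "B = (ln M - ln m)^2"
  have VB: "V t \<le> B" for t
  proof -
    have "ln m \<le> ln (u1 t)" "ln (u1 t) \<le> ln M" "ln m \<le> ln (u2 t)" "ln (u2 t) \<le> ln M"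
      using b1[of t] b2[of t] m pos[of t] by auto
    hence "\<bar>w t\<bar> \<le> ln M - ln m" unfolding w_def by linarith
    hence "\<bar>w t\<bar>^2 \<le> (ln M - ln m)^2" by (rule power_mono) simp
    thus ?thesis by (simp add: V_def B_def)
  qed
  define s where "s = t0 - (B + 1) / (k * V t0)"
  have s: "s \<le> t0" using k Vt0 VB[of 0] V0[of 0] by (simp add: s_def)
  have "k * V t0 * (t0 - s) = B + 1" using k Vt0 by (simp add: s_def)
  with grow[OF s] have "V t0 + B + 1 \<le> V s" by (simp add: algebra_simps)
  with VB[of s] Vt0 show False by linarith
qed

theorem lemma3p1:
  fixes D :: "'a::euclidean_space set"
    and g :: "real \<Rightarrow> 'a \<Rightarrow> real"
    and f fu :: "real \<Rightarrow> 'a \<Rightarrow> real \<Rightarrow> real"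
    and x :: 'a
  assumes "(open D \<and> connected D \<and> D \<noteq> {} \<and> bounded D) \<or> D = UNIV"
    and "bounded ((\<lambda>(t,y). g t y) ` (UNIV \<times> closure D))"
    and "uniformly_continuous_on (UNIV \<times> closure D) (\<lambda>(t,y). g t y)"
    and "\<forall>t. \<forall>y\<in>D. g t y > 0"
    and "assm_Af D f fu"
    and "x \<in> closure D"
    and "pos_bdd_entire_sol g f x u1"
    and "pos_bdd_entire_sol g f x u2"
  shows "u1 = u2"
proof -
  note Af = assms(5)[unfolded assm_Af_def]
  have derf: "\<And>t v. DERIV (f t x) v :> fu t x v" using Af[THEN conjunct1] assms(6) by blast
  have ucE: "\<And>E. bounded E \<Longrightarrow> uniformly_continuous_on (UNIV \<times> closure D \<times> E) (\<lambda>(t,x,u). fu t x u)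
       \<and> bounded ((\<lambda>(t,x,u). fu t x u) ` (UNIV \<times> closure D \<times> E))"
    using Af[THEN conjunct2, THEN conjunct2, THEN conjunct1] by blast
  have Sneg: "\<And>v. v \<ge> 0 \<Longrightarrow> Sup ((\<lambda>(t,x). fu t x v) ` (UNIV \<times> closure D)) < 0"
    using Af[THEN conjunct2, THEN conjunct2, THEN conjunct2, THEN conjunct2, THEN conjunct2, THEN conjunct2] by blast
  have s1: "(\<forall>t. (u1 has_real_derivative (g t x + u1 t * f t x (u1 t))) (at t))"
     "bdd_below (range u1)" "Inf (range u1) > 0" "bdd_above (range u1)"
    using assms(7) unfolding pos_bdd_entire_sol_def by auto
  have s2: "(\<forall>t. (u2 has_real_derivative (g t x + u2 t * f t x (u2 t))) (at t))"
     "bdd_below (range u2)" "Inf (range u2) > 0" "bdd_above (range u2)"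
    using assms(8) unfolding pos_bdd_entire_sol_def by auto
  define m where "m = min (Inf (range u1)) (Inf (range u2))"
  define M where "M = max (Sup (range u1)) (Sup (range u2))"
  have m: "m > 0" using s1 s2 by (simp add: m_def)
  have b1: "\<And>t. m \<le> u1 t \<and> u1 t \<le> M"
  proof -
    fix t
    have "Inf (range u1) \<le> u1 t" by (rule cInf_lower[OF _ s1(2)]) simp
    moreover have "u1 t \<le> Sup (range u1)" by (rule cSup_upper[OF _ s1(4)]) simp
    ultimately show "m \<le> u1 t \<and> u1 t \<le> M" unfolding m_def M_def by linarith
  qed
  have b2: "\<And>t. m \<le> u2 t \<and> u2 t \<le> M"
  proof -
    fix t
    have "Inf (range u2) \<le> u2 t" by (rule cInf_lower[OF _ s2(2)]) simp
    moreover have "u2 t \<le> Sup (range u2)" by (rule cSup_upper[OF _ s2(4)]) simp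
    ultimately show "m \<le> u2 t \<and> u2 t \<le> M" unfolding m_def M_def by linarith
  qed
  have mM: "m \<le> M" using b1[of 0] by linarith
  define S where "S v = Sup ((\<lambda>(t,x). fu t x v) ` (UNIV \<times> closure D))" for v
  have ne: "(\<lambda>(t,x). fu t x v) ` (UNIV \<times> closure D) \<noteq> {}" for v using assms(6) by auto
  have bddS: "bdd_above ((\<lambda>(t,x). fu t x v) ` (UNIV \<times> closure D))" for v
  proof -
    have "bounded ((\<lambda>(t,x,u). fu t x u) ` (UNIV \<times> closure D \<times> {v}))" using ucE[of "{v}"] by simp
    hence "bdd_above ((\<lambda>(t,x,u). fu t x u) ` (UNIV \<times> closure D \<times> {v}))" by (rule bounded_imp_bdd_above)
    moreover have "(\<lambda>(t,x). fu t x v) ` (UNIV \<times> closure D) \<subseteq> (\<lambda>(t,x,u). fu t x u) ` (UNIV \<times> closure D \<times> {v})"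
      by force
    ultimately show ?thesis by (rule bdd_above_mono)
  qed
  have upS: "fu t y v \<le> S v" if "y \<in> closure D" for t y v
    unfolding S_def by (rule cSup_upper[OF _ bddS]) (use that in force)
  have contS: "continuous_on {m..M} S"
    unfolding continuous_on_iff
  proof (intro ballI allI impI)
    fix v e :: real assume v: "v \<in> {m..M}" and e: "0 < e"
    have "uniformly_continuous_on (UNIV \<times> closure D \<times> {m..M}) (\<lambda>(t,x,u). fu t x u)"
      using ucE[of "{m..M}"] by simp
    then obtain \<eta> where \<eta>: "\<eta> > 0" and
      H: "\<And>p q. p \<in> UNIV \<times> closure D \<times> {m..M} \<Longrightarrow> q \<in> UNIV \<times> closure D \<times> {m..M} \<Longrightarrow> dist q p < \<eta> \<Longrightarrow>
        dist ((\<lambda>(t,x,u). fu t x u) q) ((\<lambda>(t,x,u). fu t x u) p) < e/2"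
      unfolding uniformly_continuous_on_def using e by (metis half_gt_zero)
    have one: "S a \<le> S b + e/2" if a: "a \<in> {m..M}" and b: "b \<in> {m..M}" and ab: "dist a b < \<eta>" for a b
      unfolding S_def[of a]
    proof (rule cSup_least[OF ne])
      fix z assume "z \<in> (\<lambda>(t,x). fu t x a) ` (UNIV \<times> closure D)"
      then obtain t y where y: "y \<in> closure D" and z: "z = fu t y a" by auto
      have "dist (t,y,a) (t,y,b) < \<eta>" using ab by (simp add: dist_Pair_Pair)
      hence "dist (fu t y a) (fu t y b) < e/2" using H[of "(t,y,b)" "(t,y,a)"] y a b by auto
      hence "fu t y a < fu t y b + e/2" unfolding dist_real_def by linarith
      with upS[OF y, of t b] show "z \<le> S b + e/2" using z by linarith
    qed
    show "\<exists>d>0. \<forall>v'\<in>{m..M}. dist v' v < d \<longrightarrow> dist (S v') (S v) < e"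
    proof (intro exI[of _ \<eta>] conjI ballI impI \<eta>)
      fix v' assume v': "v' \<in> {m..M}" and d: "dist v' v < \<eta>"
      have "S v' \<le> S v + e/2" using one[OF v' v d] .
      moreover have "S v \<le> S v' + e/2" using one[OF v v'] d by (simp add: dist_commute)
      ultimately show "dist (S v') (S v) < e" using e by (simp add: dist_real_def)
    qed
  qed
  obtain v0 where v0: "v0 \<in> {m..M}" and v0max: "\<And>v. v \<in> {m..M} \<Longrightarrow> S v \<le> S v0"
    using continuous_attains_sup[OF compact_Icc _ contS] mM by auto
  define \<delta> where "\<delta> = - S v0"
  have d: "\<delta> > 0" using Sneg[of v0] v0 m unfolding \<delta>_def S_def by auto
  have neg: "\<And>t v. m \<le> v \<Longrightarrow> v \<le> M \<Longrightarrow> fu t x v \<le> -\<delta>"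
    using upS[OF assms(6)] v0max unfolding \<delta>_def by (smt (verit) atLeastAtMost_iff)
  have G: "\<And>t. 0 \<le> g t x"
  proof -
    fix t
    have c1: "continuous_on (UNIV \<times> closure D) (\<lambda>(t,y). g t y)"
      using assms(3) by (rule uniformly_continuous_imp_continuous)
    have "continuous_on (closure D) (\<lambda>y. (\<lambda>(t,y). g t y) (t, y))"
      by (rule continuous_on_compose2[OF c1]) (auto intro!: continuous_intros)
    hence c2: "continuous_on (closure D) (\<lambda>y. g t y)" by simp
    show "0 \<le> g t x"
      by (rule continuous_ge_on_closure[OF c2 assms(6)]) (use assms(4) in \<open>auto intro: less_imp_le\<close>)
  qed
  show ?thesis
    by (rule key[where F="\<lambda>t. f t x" and F'="\<lambda>t. fu t x" and G="\<lambda>t. g t x", OF m d G derf neg])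
       (use s1 s2 b1 b2 in auto)
qed

end
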